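(* Let $x_1,x_2,x_3>0$, $\gamma,\delta>0$ with $\gamma\ne1\ne\delta$, and let $$\mathbf{Q}=\begin{pmatrix}1&\delta x_1&x_2&x_3\\ 1/(\delta x_1)&1&x_2/x_1&x_3/x_1\\ 1/x_2&x_1/x_2&1&\gamma x_3/x_2\\ 1/x_3&x_1/x_3&x_2/(\gamma x_3)&1\end{pmatrix}$$ with principal right eigenvector $\mathbf{w}^{EM}$. Then $\gamma>1$ iff $w_3^{EM}/w_4^{EM}<\gamma x_3/x_2$, and $\gamma<1$ iff $w_3^{EM}/w_4^{EM}>\gamma x_3/x_2$.
   Context: The principal right eigenvector is the positive (Perron) eigenvector belonging to the largest eigenvalue. *)

theory Defs
  imports "HOL-Analysis.Analysis"
begin

definition principal_right_eigenvector :: "real^'n^'n \<Rightarrow> real^'n \<Rightarrow> bool" where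
  "principal_right_eigenvector A w \<longleftrightarrow>
     (\<forall>i. w $ i > 0) \<and>
     (\<exists>lam. A *v w = lam *\<^sub>R w \<and>
        (\<forall>mu v. v \<noteq> 0 \<and> A *v v = mu *\<^sub>R v \<longrightarrow> mu \<le> lam))"

text \<open>The 4x4 matrix Q; rows/columns are indexed 1,2,3,4 (in the type 4, index 4 = 0).\<close>
definition Qmat :: "real \<Rightarrow> real \<Rightarrow> real \<Rightarrow> real \<Rightarrow> real \<Rightarrow> real^4^4" where
  "Qmat x1 x2 x3 \<gamma> \<delta> = vector [
     vector [1, \<delta> * x1, x2, x3],
     vector [1 / (\<delta> * x1), 1, x2 / x1, x3 / x1],
     vector [1 / x2, x1 / x2, 1, \<gamma> * x3 / x2],
     vector [1 / x3, x1 / x3, x2 / (\<gamma> * x3), 1]]"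

lemma Qmat_check: "Qmat x1 x2 x3 g d $ 3 $ 4 = g * x3 / x2"
  "Qmat x1 x2 x3 g d $ 4 $ 3 = x2 / (g * x3)" "Qmat x1 x2 x3 g d $ 1 $ 2 = d * x1"
  by (simp_all add: Qmat_def vector_def)

end

theory Submission
  imports Defs
begin

theorem mainTheorem16:
  fixes x1 x2 x3 \<gamma> \<delta> :: real and w :: "real^4"
  assumes "x1 > 0" "x2 > 0" "x3 > 0" "\<gamma> > 0" "\<delta> > 0" "\<gamma> \<noteq> 1" "\<delta> \<noteq> 1"
    and "principal_right_eigenvector (Qmat x1 x2 x3 \<gamma> \<delta>) w"
  shows "(\<gamma> > 1 \<longleftrightarrow> w $ 3 / w $ 4 < \<gamma> * x3 / x2) \<and>
         (\<gamma> < 1 \<longleftrightarrow> w $ 3 / w $ 4 > \<gamma> * x3 / x2)"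
proof -
  from assms(8) obtain lam where pos: "\<And>i. w $ i > 0"
    and ev: "Qmat x1 x2 x3 \<gamma> \<delta> *v w = lam *\<^sub>R w"
    unfolding principal_right_eigenvector_def by blast
  have w1: "w$1 > 0" and w2: "w$2>0" and w3: "w$3 > 0" and w4: "w$4>0" using pos by auto
  have e3: "(Qmat x1 x2 x3 \<gamma> \<delta> *v w) $ 3 = lam * w$3" using ev by simp
  have e4: "(Qmat x1 x2 x3 \<gamma> \<delta> *v w) $ 4 = lam * w$4" using ev by simp
  have r3: "w$1/x2 + x1/x2 * w$2 + w$3 + \<gamma>*x3/x2 * w$4 = lam * w$3"
    using e3 by (simp add: matrix_vector_mult_def sum_4 Qmat_def vector_def)
  have r4: "w$1/x3 + x1/x3 * w$2 + x2/(\<gamma>*x3) * w$3 + w$4 = lam * w$4"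
    using e4 by (simp add: matrix_vector_mult_def sum_4 Qmat_def vector_def)
  have lampos: "lam > 0"
  proof -
    have "w$1/x2 + x1/x2 * w$2 + w$3 + \<gamma>*x3/x2 * w$4 > 0"
      using assms w1 w2 w3 w4 by (intro add_pos_pos mult_pos_pos divide_pos_pos) auto
    then have "lam * w$3 > 0" using r3 by simp
    then show ?thesis using w3 by (simp add: zero_less_mult_iff)
  qed
  define S where "S = (w$1 + x1 * w$2)/x2"
  have Spos: "S > 0" unfolding S_def using assms w1 w2 by (intro divide_pos_pos add_pos_pos mult_pos_pos) auto
  have r4': "\<gamma>*S + w$3 + \<gamma>*x3/x2 * w$4 = lam * (\<gamma>*x3/x2 * w$4)"
  proof -
    have "\<gamma>*x3/x2 * (w$1/x3 + x1/x3 * w$2 + x2/(\<gamma>*x3) * w$3 + w$4) = \<gamma>*x3/x2 * (lam * w$4)"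
      using r4 by simp
    moreover have "\<gamma>*x3/x2 * (w$1/x3 + x1/x3 * w$2 + x2/(\<gamma>*x3) * w$3 + w$4) = \<gamma>*S + w$3 + \<gamma>*x3/x2 * w$4"
      using assms unfolding S_def by (simp add: field_simps)
    ultimately show ?thesis by (metis mult.commute mult.left_commute)
  qed
  have r3': "S + w$3 + \<gamma>*x3/x2 * w$4 = lam * w$3"
    using r3 assms unfolding S_def by (simp add: field_simps)
  have key: "lam * (w$3 - \<gamma>*x3/x2 * w$4) = (1 - \<gamma>) * S"
    using r3' r4' by (simp add: algebra_simps)
  have q: "w $ 3 / w $ 4 < \<gamma> * x3 / x2 \<longleftrightarrow> w$3 - \<gamma>*x3/x2 * w$4 < 0"
    using w4 by (simp add: divide_less_eq algebra_simps)
  have q2: "w $ 3 / w $ 4 > \<gamma> * x3 / x2 \<longleftrightarrow> w$3 - \<gamma>*x3/x2 * w$4 > 0"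
    using w4 by (simp add: less_divide_eq algebra_simps)
  have s1: "w$3 - \<gamma>*x3/x2 * w$4 < 0 \<longleftrightarrow> \<gamma> > 1"
  proof -
    have "w$3 - \<gamma>*x3/x2 * w$4 < 0 \<longleftrightarrow> lam * (w$3 - \<gamma>*x3/x2 * w$4) < 0"
      using lampos by (simp add: mult_less_0_iff)
    also have "\<dots> \<longleftrightarrow> (1 - \<gamma>) * S < 0" using key by simp
    also have "\<dots> \<longleftrightarrow> \<gamma> > 1" using Spos by (simp add: mult_less_0_iff)
    finally show ?thesis .
  qed
  have s2: "w$3 - \<gamma>*x3/x2 * w$4 > 0 \<longleftrightarrow> \<gamma> < 1"
  proof -
    have "w$3 - \<gamma>*x3/x2 * w$4 > 0 \<longleftrightarrow> lam * (w$3 - \<gamma>*x3/x2 * w$4) > 0"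
      using lampos by (simp add: zero_less_mult_iff)
    also have "\<dots> \<longleftrightarrow> (1 - \<gamma>) * S > 0" using key by simp
    also have "\<dots> \<longleftrightarrow> \<gamma> < 1" using Spos by (simp add: zero_less_mult_iff)
    finally show ?thesis .
  qed
  show ?thesis using q q2 s1 s2 by simp
qed

end
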